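(* Let $T$ be a non-periodic transformation of a Lebesgue probability space $(\Omega,\mathcal{B},\mu)$. Then there is a countable measurable partition of $\Omega$ whose pieces are labeled by the positive integers $\{1,2,3,\dots\}$ which generates $T$ and has the following property. Writing $h(\omega)$ for the label of the piece containing $\omega$: for almost every $\omega$, if $h(T^{-1}(\omega))=n$, then the values $h(T^{-n}(\omega)),h(T^{1-n}(\omega)),\dots,h(T^{-1}(\omega))$ determine $h(\omega)$; that is, for each $n\ge 1$ there is a function $F_n:\mathbb{N}^n\to\mathbb{N}$ such that $h(\omega)=F_n\big(h(T^{-n}(\omega)),\dots,h(T^{-1}(\omega))\big)$ for almost every $\omega$ with $h(T^{-1}(\omega))=n$.
   Context: A non-periodic transformation is a one-to-one measure preserving transformation $T$ of a Lebesgue probability space such that $\mu(\{\omega: T^i(\omega)=\omega \text{ for some } i\ge 1\})=0$. For a partition $P$, the $T,P$ name of $\omega$ is the doubly infinite sequence $(X_i)_{i\in\mathbb{Z}}$ where $X_i$ is the piece of $P$ containing $T^i(\omega)$. $P$ generates $T$ if the map $\omega\mapsto$ ($T,P$ name of $\omega$) separates points off a null set, i.e. there is a null set $Z$ such that distinct points outside $Z$ have distinct $T,P$ names. All statements are understood modulo null sets. *)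

theory Defs
  imports "HOL-Probability.Probability"
begin

text \<open>A Lebesgue probability space: the completion of a Borel probability
  measure on a Polish space (Rokhlin's definition, up to isomorphism mod 0).\<close>
definition lebesgue_prob_space :: "'a::polish_space measure \<Rightarrow> bool" where
  "lebesgue_prob_space M \<longleftrightarrow>
     (\<exists>N. sets N = sets borel \<and> prob_space N \<and> M = completion N)"

definition invertible_mpt :: "'a measure \<Rightarrow> ('a \<Rightarrow> 'a) \<Rightarrow> bool" where
  "invertible_mpt M T \<longleftrightarrow> bij T \<and> T \<in> measurable M M \<and> inv T \<in> measurable M M
     \<and> distr M M T = M"

definition tpow :: "('a \<Rightarrow> 'a) \<Rightarrow> int \<Rightarrow> 'a \<Rightarrow> 'a" where
  "tpow T i = (if 0 \<le> i then T ^^ nat i else inv T ^^ nat (- i))"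

definition non_periodic :: "'a measure \<Rightarrow> ('a \<Rightarrow> 'a) \<Rightarrow> bool" where
  "non_periodic M T \<longleftrightarrow> invertible_mpt M T \<and>
     {\<omega> \<in> space M. \<exists>i::nat. i \<ge> 1 \<and> (T ^^ i) \<omega> = \<omega>} \<in> null_sets M"

definition generates :: "'a measure \<Rightarrow> ('a \<Rightarrow> 'a) \<Rightarrow> ('a \<Rightarrow> nat) \<Rightarrow> bool" where
  "generates M T h \<longleftrightarrow> (\<exists>Z \<in> null_sets M. \<forall>x \<in> space M - Z. \<forall>y \<in> space M - Z.
     (\<forall>i::int. h (tpow T i x) = h (tpow T i y)) \<longrightarrow> x = y)"

end

theory Submission
  imports Defs "HOL-Library.Countable" "HOL-Library.Nat_Bijection"
begin


definition good :: "(int \<Rightarrow> nat) \<Rightarrow> bool" where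
  "good l \<longleftrightarrow> (\<forall>j a. (\<exists>i>a. j < l i) \<and> (\<exists>i<a. j < l i))"

definition Rn :: "(int \<Rightarrow> nat) \<Rightarrow> int \<Rightarrow> nat" where
  "Rn l p = (LEAST k::nat. 0 < k \<and> l p < l (p + int k))"

definition Pn :: "(int \<Rightarrow> nat) \<Rightarrow> int \<Rightarrow> nat" where
  "Pn l p = (LEAST k::nat. 0 < k \<and> l p < l (p - int k))"

definition dd :: "(int \<Rightarrow> nat) \<Rightarrow> (int \<Rightarrow> nat \<Rightarrow> bool) \<Rightarrow> nat \<Rightarrow> int \<Rightarrow> nat \<times> nat \<times> bool list" where
  "dd l b m i = (l i, Pn l i, map (b i) [0..<m])"

definition Wl :: "(int \<Rightarrow> nat) \<Rightarrow> (int \<Rightarrow> nat \<Rightarrow> bool) \<Rightarrow> int \<Rightarrow> (nat \<times> nat \<times> bool list) list" where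
  "Wl l b p = map (\<lambda>k. dd l b (l p) (p + int k)) [0..<Suc (Rn l p)]"

definition hv :: "(int \<Rightarrow> nat) \<Rightarrow> (int \<Rightarrow> nat \<Rightarrow> bool) \<Rightarrow> int \<Rightarrow> nat" where
  "hv l b p = Suc (prod_encode (Pn l (p+1), to_nat (Wl l b p)))"

lemma Rn_ex: assumes "good l" shows "\<exists>k::nat. 0 < k \<and> l p < l (p + int k)"
proof -
  obtain i where "i > p" "l p < l i" using assms unfolding good_def by blast
  thus ?thesis by (intro exI[of _ "nat (i - p)"]) auto
qed

lemma Pn_ex: assumes "good l" shows "\<exists>k::nat. 0 < k \<and> l p < l (p - int k)"
proof -
  obtain i where "i < p" "l p < l i" using assms unfolding good_def by blast
  thus ?thesis by (intro exI[of _ "nat (p - i)"]) auto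
qed

lemma Rn_pos: "good l \<Longrightarrow> 0 < Rn l p" and Rn_gt: "good l \<Longrightarrow> l p < l (p + int (Rn l p))"
  unfolding Rn_def using LeastI_ex[OF Rn_ex] by blast+

lemma Rn_min: "0 < k \<Longrightarrow> k < Rn l p \<Longrightarrow> l (p + int k) \<le> l p"
  unfolding Rn_def using not_less_Least by (metis not_le)

lemma Pn_pos: "good l \<Longrightarrow> 0 < Pn l p" and Pn_gt: "good l \<Longrightarrow> l p < l (p - int (Pn l p))"
  unfolding Pn_def using LeastI_ex[OF Pn_ex] by blast+

lemma Pn_min: "0 < k \<Longrightarrow> k < Pn l p \<Longrightarrow> l (p - int k) \<le> l p"
  unfolding Pn_def using not_less_Least by (metis not_le)

lemma Least_agree:
  fixes P Q :: "nat \<Rightarrow> bool"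
  assumes "P K" "\<forall>k\<le>K. P k = Q k" "(LEAST k. P k) = K"
  shows "(LEAST k. Q k) = K"
proof (rule Least_equality)
  show "Q K" using assms by auto
  fix y assume "Q y"
  show "K \<le> y"
  proof (rule ccontr)
    assume "\<not> K \<le> y"
    hence "P y" using assms \<open>Q y\<close> by auto
    hence "(LEAST k. P k) \<le> y" by (rule Least_le)
    thus False using assms \<open>\<not> K \<le> y\<close> by simp
  qed
qed

lemma Rn_agree:
  assumes "good l" "\<forall>k\<le>Rn l p. l (p + int k) = l' (p + int k)"
  shows "Rn l' p = Rn l p"
proof -
  have e0: "l' p = l p" using assms(2)[rule_format, of 0] by simp
  have g: "0 < Rn l p \<and> l p < l (p + int (Rn l p))" using Rn_gt Rn_pos assms(1) by auto
  have ag: "\<forall>k\<le>Rn l p. (0 < k \<and> l p < l (p + int k)) = (0 < k \<and> l' p < l' (p + int k))"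
    using assms(2) e0 by auto
  have "(LEAST k. 0 < k \<and> l' p < l' (p + int k)) = Rn l p"
    by (rule Least_agree[where P="\<lambda>k. 0 < k \<and> l p < l (p + int k)", OF g ag]) (simp add: Rn_def)
  thus ?thesis by (simp add: Rn_def)
qed

lemma Pn_agree:
  assumes "good l" "\<forall>k\<le>Pn l p. l (p - int k) = l' (p - int k)"
  shows "Pn l' p = Pn l p"
proof -
  have e0: "l' p = l p" using assms(2)[rule_format, of 0] by simp
  have g: "0 < Pn l p \<and> l p < l (p - int (Pn l p))" using Pn_gt Pn_pos assms(1) by auto
  have ag: "\<forall>k\<le>Pn l p. (0 < k \<and> l p < l (p - int k)) = (0 < k \<and> l' p < l' (p - int k))"
    using assms(2) e0 by auto
  have "(LEAST k. 0 < k \<and> l' p < l' (p - int k)) = Pn l p"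
    by (rule Least_agree[where P="\<lambda>k. 0 < k \<and> l p < l (p - int k)", OF g ag]) (simp add: Pn_def)
  thus ?thesis by (simp add: Pn_def)
qed

lemma length_Wl[simp]: "length (Wl l b p) = Suc (Rn l p)"
  by (simp add: Wl_def)

lemma nth_Wl: "k \<le> Rn l p \<Longrightarrow> Wl l b p ! k = dd l b (l p) (p + int k)"
  unfolding Wl_def by (simp del: upt_Suc)

lemma hv_inj:
  assumes "hv l b p = hv l' b' p"
  shows "Pn l (p+1) = Pn l' (p+1) \<and> Wl l b p = Wl l' b' p"
  using assms unfolding hv_def by (auto simp: prod_encode_eq)

lemma Wl_eq:
  assumes "Wl l b p = Wl l' b' p" "k \<le> Rn l p"
  shows "Rn l' p = Rn l p" "l' p = l p" "l' (p + int k) = l (p + int k)"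
    "Pn l' (p + int k) = Pn l (p + int k)" "\<forall>j<l p. b' (p + int k) j = b (p + int k) j"
proof -
  show r: "Rn l' p = Rn l p" using arg_cong[OF assms(1), of length] by simp
  have "Wl l b p ! 0 = Wl l' b' p ! 0" using assms by simp
  thus l0: "l' p = l p" by (simp add: nth_Wl r dd_def)
  have "Wl l b p ! k = Wl l' b' p ! k" using assms by simp
  hence e: "dd l b (l p) (p + int k) = dd l' b' (l' p) (p + int k)"
    using assms(2) r by (simp add: nth_Wl)
  thus "l' (p + int k) = l (p + int k)" "Pn l' (p + int k) = Pn l (p + int k)"
    by (auto simp: dd_def)
  from e l0 have "map (b (p + int k)) [0..<l p] = map (b' (p + int k)) [0..<l p]"
    by (simp add: dd_def)
  thus "\<forall>j<l p. b' (p + int k) j = b (p + int k) j"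
    by (metis (no_types, lifting) diff_zero length_upt map_eq_conv nth_mem set_upt atLeastLessThan_iff zero_le)
qed

lemma key_cover:
  assumes "good l"
  shows "p + int (Rn l p) \<le> (p - int (Pn l p)) + int (Rn l (p - int (Pn l p)))"
proof (rule ccontr)
  define P where "P = Pn l p"
  define t where "t = p - int P"
  define r where "r = t + int (Rn l t)"
  assume "\<not> ?thesis"
  hence lt: "r < p + int (Rn l p)" unfolding r_def t_def P_def by simp
  have a1: "l t < l r" unfolding r_def using Rn_gt[OF assms] by simp
  have a2: "l p < l t" unfolding t_def P_def using Pn_gt[OF assms] by simp
  have rt: "t < r" unfolding r_def using Rn_pos[OF assms, of t] by simp
  show False
  proof (cases "r \<le> p")
    case True
    define k where "k = nat (p - r)"
    have rk: "r = p - int k" using True unfolding k_def by simp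
    have "k < P" using rt rk unfolding t_def by simp
    show False
    proof (cases "k = 0")
      case True thus False using rk a1 a2 by simp
    next
      case False
      hence "l r \<le> l p" using Pn_min[of k l p] \<open>k < P\<close> rk unfolding P_def by simp
      thus False using a1 a2 by simp
    qed
  next
    case False
    define k where "k = nat (r - p)"
    have rk: "r = p + int k" using False unfolding k_def by simp
    have "0 < k" "k < Rn l p" using False lt rk by simp_all
    hence "l r \<le> l p" using Rn_min rk by simp
    thus False using a1 a2 by simp
  qed
qed

lemma determ:
  assumes gl: "good l" and gl': "good l'" and n: "n = hv l b (-1)"
    and eq: "\<forall>i. - int n \<le> i \<and> i \<le> -1 \<longrightarrow> hv l b i = hv l' b' i"
  shows "hv l b 0 = hv l' b' 0"
proof -
  have n1: "1 \<le> n" unfolding n hv_def by simp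
  have "hv l b (-1) = hv l' b' (-1)" using eq n1 by simp
  from hv_inj[OF this] have pe: "Pn l 0 = Pn l' 0" and we: "Wl l b (-1) = Wl l' b' (-1)" by simp_all
  have "1 \<le> Rn l (-1)" using Rn_pos[OF gl] by (simp add: Suc_le_eq)
  from Wl_eq(3)[OF we this] have l0: "l' 0 = l 0" by simp
  define P where "P = Pn l 0"
  define t where "t = 0 - int P"
  have P1: "1 \<le> P" unfolding P_def using Pn_pos[OF gl] by (simp add: Suc_le_eq)
  have "P \<le> prod_encode (P, to_nat (Wl l b (-1)))" by (rule le_prod_encode_1)
  hence Pn': "P < n" unfolding n hv_def P_def by simp
  have "hv l b t = hv l' b' t" using eq P1 Pn' unfolding t_def by simp
  from hv_inj[OF this] have wt: "Wl l b t = Wl l' b' t" by simp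
  have kc: "0 + int (Rn l 0) \<le> t + int (Rn l t)" using key_cover[OF gl, of 0] unfolding t_def P_def .
  have lt: "l 0 < l t" using Pn_gt[OF gl, of 0] unfolding t_def P_def by simp
  have ag: "l' k = l k \<and> Pn l' k = Pn l k \<and> (\<forall>j<l t. b' k j = b k j)"
    if "0 \<le> k" "k \<le> int (Rn l 0)" for k
  proof -
    have "P + nat k \<le> Rn l t" using kc that unfolding t_def by simp
    note W = Wl_eq(3-5)[OF wt this]
    have "t + int (P + nat k) = k" unfolding t_def using that by simp
    thus ?thesis using W by simp
  qed
  have rn: "Rn l' 0 = Rn l 0"
    by (rule Rn_agree[OF gl]) (use ag in auto)
  have ww: "Wl l' b' 0 = Wl l b 0"
  proof (rule nth_equalityI)
    show "length (Wl l' b' 0) = length (Wl l b 0)" using rn by simp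
    fix k assume "k < length (Wl l' b' 0)"
    hence k: "k \<le> Rn l 0" using rn by simp
    have a: "l' (int k) = l (int k)" "Pn l' (int k) = Pn l (int k)" "\<forall>j<l t. b' (int k) j = b (int k) j"
      using ag[of "int k"] k by auto
    have "map (b' (int k)) [0..<l 0] = map (b (int k)) [0..<l 0]"
      using a(3) lt by auto
    thus "Wl l' b' 0 ! k = Wl l b 0 ! k"
      using k rn a l0 by (simp add: nth_Wl dd_def)
  qed
  have "Pn l' 1 = Pn l 1" using ag[of 1] Rn_pos[OF gl, of 0] by simp
  thus ?thesis unfolding hv_def using ww by simp
qed

lemma gen_bits:
  assumes gl: "good l" and eq: "\<forall>i. hv l b i = hv l' b' i"
  shows "b' 0 j = b 0 j"
proof -
  have ex: "\<exists>k::nat. j < l (- int k)"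
  proof -
    obtain i where "i < 1" "j < l i" using gl unfolding good_def by blast
    thus ?thesis by (intro exI[of _ "nat (- i)"]) simp
  qed
  define K where "K = (LEAST k::nat. j < l (- int k))"
  define p where "p = - int K"
  have jp: "j < l p" unfolding p_def K_def by (rule LeastI_ex[OF ex])
  have small: "l (- int k) \<le> j" if "k < K" for k
    using not_less_Least[OF that[unfolded K_def]] by simp
  have KR: "K \<le> Rn l p"
  proof (rule ccontr)
    assume "\<not> K \<le> Rn l p"
    hence "K - Rn l p < K" using Rn_pos[OF gl, of p] by simp
    hence "l (- int (K - Rn l p)) \<le> j" by (rule small)
    moreover have "- int (K - Rn l p) = p + int (Rn l p)" using \<open>\<not> K \<le> Rn l p\<close> unfolding p_def by simp
    ultimately show False using Rn_gt[OF gl, of p] jp by simp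
  qed
  from hv_inj[OF eq[rule_format, of p]] have "Wl l b p = Wl l' b' p" by simp
  from Wl_eq(5)[OF this KR] jp show ?thesis unfolding p_def by simp
qed

lemma locality:
  assumes gl: "good l" and gl': "good l'"
    and agL: "\<forall>i. - int (\<Sum>k\<le>Rn l 0. Pn l (int k)) \<le> i \<and> i \<le> int (Rn l 0) \<longrightarrow> l' i = l i"
    and agB: "\<forall>i j. 0 \<le> i \<and> i \<le> int (Rn l 0) \<and> j < l 0 \<longrightarrow> b' i j = b i j"
  shows "hv l' b' 0 = hv l b 0"
proof -
  define S where "S = (\<Sum>k\<le>Rn l 0. Pn l (int k))"
  have agL': "l' i = l i" if "- int S \<le> i" "i \<le> int (Rn l 0)" for i
    using agL that unfolding S_def by blast
  have rn: "Rn l' 0 = Rn l 0"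
  proof (rule Rn_agree[OF gl], intro allI impI)
    fix k assume "k \<le> Rn l 0"
    thus "l (0 + int k) = l' (0 + int k)" using agL'[of "int k"] by simp
  qed
  have pn: "Pn l' (int k) = Pn l (int k)" if "k \<le> Rn l 0" for k
  proof (rule Pn_agree[OF gl], intro allI impI)
    fix k' assume "k' \<le> Pn l (int k)"
    moreover have "Pn l (int k) \<le> S" unfolding S_def by (rule member_le_sum) (use that in auto)
    ultimately show "l (int k - int k') = l' (int k - int k')"
      using agL'[of "int k - int k'"] that by auto
  qed
  have ww: "Wl l' b' 0 = Wl l b 0"
  proof (rule nth_equalityI)
    show "length (Wl l' b' 0) = length (Wl l b 0)" using rn by simp
    fix k assume "k < length (Wl l' b' 0)"
    hence k: "k \<le> Rn l 0" using rn by simp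
    have "map (b' (int k)) [0..<l 0] = map (b (int k)) [0..<l 0]"
      using agB k by auto
    moreover have "l' (int k) = l (int k)" "l' 0 = l 0" using agL'[of "int k"] agL'[of 0] k by auto
    ultimately show "Wl l' b' 0 ! k = Wl l b 0 ! k"
      using k rn pn[OF k] by (simp add: nth_Wl dd_def)
  qed
  have "Pn l' 1 = Pn l 1" using pn[of 1] Rn_pos[OF gl, of 0] by simp
  thus ?thesis unfolding hv_def using ww by simp
qed

lemma good_shift: "good l \<Longrightarrow> good (\<lambda>i. l (i + k))"
  unfolding good_def
proof (intro allI conjI)
  fix j a assume g: "\<forall>j a. (\<exists>i>a. j < l i) \<and> (\<exists>i<a. j < l i)"
  obtain i where "i > a + k" "j < l i" using g by blast
  thus "\<exists>i>a. j < l (i + k)" by (intro exI[of _ "i - k"]) auto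
  obtain i' where "i' < a + k" "j < l i'" using g by blast
  thus "\<exists>i<a. j < l (i + k)" by (intro exI[of _ "i' - k"]) auto
qed

lemma hv_shift: "hv (\<lambda>i. l (i + k)) (\<lambda>i. b (i + k)) p = hv l b (p + k)"
proof -
  have r: "Rn (\<lambda>i. l (i + k)) q = Rn l (q + k)" for q
    unfolding Rn_def by (simp add: algebra_simps)
  have pp: "Pn (\<lambda>i. l (i + k)) q = Pn l (q + k)" for q
    unfolding Pn_def by (simp add: algebra_simps)
  have w: "Wl (\<lambda>i. l (i + k)) (\<lambda>i. b (i + k)) p = Wl l b (p + k)"
    unfolding Wl_def dd_def by (simp add: r pp algebra_simps)
  show ?thesis unfolding hv_def w pp by (simp add: algebra_simps)
qed




lemma tpow_0[simp]: "tpow T 0 = id"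
  by (simp add: tpow_def)

lemma tpow_succ:
  assumes "bij T"
  shows "tpow T (i + 1) x = T (tpow T i x)"
proof -
  have TinvT: "T (inv T y) = y" for y using assms by (simp add: bij_is_surj surj_f_inv_f)
  show ?thesis
  proof (cases "0 \<le> i")
    case True
    hence "nat (i + 1) = Suc (nat i)" by simp
    thus ?thesis using True by (simp add: tpow_def)
  next
    case False
    hence i: "nat (- i) = Suc (nat (- (i + 1)))" by simp
    show ?thesis
    proof (cases "i = -1")
      case True thus ?thesis by (simp add: tpow_def TinvT)
    next
      case False
      with \<open>\<not> 0 \<le> i\<close> have "\<not> 0 \<le> i + 1" by simp
      thus ?thesis using \<open>\<not> 0 \<le> i\<close> i by (simp add: tpow_def TinvT)
    qed
  qed
qed

lemma tpow_pred:
  assumes "bij T"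
  shows "tpow T (i - 1) x = inv T (tpow T i x)"
proof -
  have "tpow T i x = T (tpow T (i - 1) x)" using tpow_succ[OF assms, of "i - 1"] by simp
  thus ?thesis using assms by (simp add: bij_is_inj)
qed

lemma tpow_add:
  assumes "bij T"
  shows "tpow T (i + j) x = tpow T i (tpow T j x)"
proof (induction i rule: int_induct[where k=0])
  case base thus ?case by simp
next
  case (step1 i)
  have e: "i + 1 + j = (i + j) + 1" by simp
  have "tpow T (i + 1 + j) x = tpow T ((i + j) + 1) x" unfolding e ..
  also have "\<dots> = T (tpow T (i + j) x)" by (rule tpow_succ[OF assms])
  finally show ?case using step1 by (simp add: tpow_succ[OF assms])
next
  case (step2 i)
  have e: "i - 1 + j = (i + j) - 1" by simp
  have "tpow T (i - 1 + j) x = tpow T ((i + j) - 1) x" unfolding e ..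
  also have "\<dots> = inv T (tpow T (i + j) x)" by (rule tpow_pred[OF assms])
  finally show ?case using step2 by (simp add: tpow_pred[OF assms])
qed

lemma tpow_nat: "tpow T (int n) = T ^^ n"
  by (simp add: tpow_def)

lemma tpow_neg_nat: "tpow T (- int n) = inv T ^^ n"
  by (cases "n = 0") (simp_all add: tpow_def)

lemma tpow_inj:
  assumes "bij T" "tpow T k y = tpow T k z" shows "y = z"
proof -
  have "tpow T (-k + k) y = tpow T (-k + k) z" using assms by (simp only: tpow_add[OF assms(1)])
  thus ?thesis by simp
qed

lemma ex_sep: "\<exists>U::nat \<Rightarrow> 'a::polish_space set. (\<forall>j. open (U j)) \<and> (\<forall>x y. x \<noteq> y \<longrightarrow> (\<exists>j. x \<in> U j \<and> y \<notin> U j))"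
proof -
  obtain B :: "'a set set" where B: "countable B" "topological_basis B" using ex_countable_basis by blast
  have ne: "B \<noteq> {}"
  proof
    assume "B = {}"
    obtain x :: 'a where True by simp
    from topological_basisE[OF B(2) open_UNIV, of x] \<open>B = {}\<close> show False by auto
  qed
  define U where "U = from_nat_into B"
  have "open (U j)" for j using from_nat_into[OF ne, of j] B(2) unfolding U_def topological_basis_def by auto
  moreover have "\<exists>j. x \<in> U j \<and> y \<notin> U j" if xy: "x \<noteq> y" for x y
  proof -
    obtain O' where "open O'" "x \<in> O'" "y \<notin> O'" using t1_space[OF xy] by blast
    then obtain V where V: "V \<in> B" "x \<in> V" "V \<subseteq> O'" using topological_basisE[OF B(2)] by metis
    then obtain j where "V = U j" unfolding U_def using range_from_nat_into[OF ne B(1)] by (metis imageE)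
    thus ?thesis using V \<open>y \<notin> O'\<close> by auto
  qed
  ultimately show ?thesis by blast
qed

definition Uf :: "nat \<Rightarrow> 'a::polish_space set" where
  "Uf = (SOME U. (\<forall>j. open (U j)) \<and> (\<forall>x y. x \<noteq> y \<longrightarrow> (\<exists>j. x \<in> U j \<and> y \<notin> U j)))"

lemma Uf_open: "open (Uf j)" and Uf_sep: "x \<noteq> y \<Longrightarrow> \<exists>j. x \<in> Uf j \<and> y \<notin> Uf j"
  using someI_ex[OF ex_sep] unfolding Uf_def by blast+

locale npsetup =
  fixes M :: "'a::polish_space measure" and T :: "'a \<Rightarrow> 'a"
  assumes lp: "lebesgue_prob_space M" and np: "non_periodic M T"
begin

lemma bijT: "bij T" and measT: "T \<in> measurable M M" and measiT: "inv T \<in> measurable M M"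
  and distrT: "distr M M T = M"
  using np unfolding non_periodic_def invertible_mpt_def by auto

lemma perN: "{\<omega> \<in> space M. \<exists>i::nat. i \<ge> 1 \<and> (T ^^ i) \<omega> = \<omega>} \<in> null_sets M"
  using np unfolding non_periodic_def by auto

lemma exN: "\<exists>N. sets N = sets borel \<and> prob_space N \<and> M = completion N"
  using lp unfolding lebesgue_prob_space_def by auto

lemma space_M[simp]: "space M = UNIV"
proof -
  obtain N where "sets N = sets borel" "M = completion N" using exN by auto
  thus ?thesis using sets_eq_imp_space_eq[of N borel] by simp
qed

lemma prob_M: "prob_space M"
proof -
  obtain N where "prob_space N" "M = completion N" using exN by auto
  thus ?thesis using prob_space.prob_space_completion by blast
qed

lemma borel_sets: "A \<in> sets borel \<Longrightarrow> A \<in> sets M"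
proof -
  obtain N where "sets N = sets borel" "M = completion N" using exN by auto
  thus "A \<in> sets borel \<Longrightarrow> A \<in> sets M" by auto
qed

lemma complete: "B \<subseteq> A \<Longrightarrow> A \<in> null_sets M \<Longrightarrow> B \<in> null_sets M"
proof -
  obtain N where "M = completion N" using exN by auto
  thus "B \<subseteq> A \<Longrightarrow> A \<in> null_sets M \<Longrightarrow> B \<in> null_sets M"
    using null_sets_completion_subset by blast
qed

lemma meas_pre_T: "A \<in> sets M \<Longrightarrow> emeasure M (T -` A) = emeasure M A"
  using emeasure_distr[OF measT, of A] distrT by simp

lemma sets_pre_T: "A \<in> sets M \<Longrightarrow> T -` A \<in> sets M"
  using measurable_sets[OF measT] by simp

lemma sets_pre_iT: "A \<in> sets M \<Longrightarrow> inv T -` A \<in> sets M"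
  using measurable_sets[OF measiT] by simp

lemma meas_pre_iT: "A \<in> sets M \<Longrightarrow> emeasure M (inv T -` A) = emeasure M A"
proof -
  assume A: "A \<in> sets M"
  have "T -` (inv T -` A) = A" using bijT by (auto simp: bij_is_inj)
  thus ?thesis using meas_pre_T[OF sets_pre_iT[OF A]] by simp
qed

lemma sets_pre_funpow: "A \<in> sets M \<Longrightarrow> (f \<in> {T, inv T}) \<Longrightarrow> (f ^^ n) -` A \<in> sets M"
proof (induction n arbitrary: A)
  case 0 thus ?case by simp
next
  case (Suc n)
  have "(f ^^ Suc n) -` A = (f ^^ n) -` (f -` A)" by (simp add: funpow_Suc_right vimage_comp)
  moreover have "f -` A \<in> sets M" using Suc.prems sets_pre_T sets_pre_iT by auto
  ultimately show ?case using Suc.IH Suc.prems(2) by metis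
qed

lemma meas_pre_funpow: "A \<in> sets M \<Longrightarrow> (f \<in> {T, inv T}) \<Longrightarrow> emeasure M ((f ^^ n) -` A) = emeasure M A"
proof (induction n arbitrary: A)
  case 0 thus ?case by simp
next
  case (Suc n)
  have "(f ^^ Suc n) -` A = (f ^^ n) -` (f -` A)" by (simp add: funpow_Suc_right vimage_comp)
  moreover have "f -` A \<in> sets M" "emeasure M (f -` A) = emeasure M A"
    using Suc.prems sets_pre_T sets_pre_iT meas_pre_T meas_pre_iT by auto
  ultimately show ?case using Suc.IH Suc.prems(2) by metis
qed

lemma sets_pre_tpow: "A \<in> sets M \<Longrightarrow> tpow T i -` A \<in> sets M"
  unfolding tpow_def by (auto intro: sets_pre_funpow)

lemma meas_pre_tpow: "A \<in> sets M \<Longrightarrow> emeasure M (tpow T i -` A) = emeasure M A"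
  unfolding tpow_def by (auto intro: meas_pre_funpow)

lemma null_pre_tpow: "A \<in> null_sets M \<Longrightarrow> tpow T i -` A \<in> null_sets M"
  using sets_pre_tpow meas_pre_tpow by (auto simp: null_sets_def)

end


context npsetup
begin

lemma Uf_sets: "Uf j \<in> sets M"
  using borel_sets[OF borel_open[OF Uf_open]] .

definition X0 :: "'a::polish_space set" where
  "X0 = - {\<omega>. \<exists>i::nat. i \<ge> 1 \<and> (T ^^ i) \<omega> = \<omega>}"

lemma X0_null: "- X0 \<in> null_sets M"
  using perN unfolding X0_def by simp

lemma X0_sets: "X0 \<in> sets M"
proof -
  have "- X0 \<in> sets M" using X0_null by auto
  hence "space M - (- X0) \<in> sets M" by (rule sets.compl_sets)
  thus ?thesis by simp
qed

lemma X0_aper: assumes "y \<in> X0" "i \<noteq> 0" shows "tpow T i y \<noteq> y"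
proof
  assume e: "tpow T i y = y"
  have "\<exists>n::nat. n \<ge> 1 \<and> tpow T (int n) y = y"
  proof (cases "i > 0")
    case True thus ?thesis using e by (intro exI[of _ "nat i"]) simp
  next
    case False
    have "tpow T (-i) y = tpow T (-i) (tpow T i y)" using e by simp
    also have "\<dots> = tpow T (-i + i) y" by (rule tpow_add[OF bijT, symmetric])
    finally have "tpow T (-i) y = y" by simp
    thus ?thesis using False assms(2) by (intro exI[of _ "nat (-i)"]) simp
  qed
  thus False using assms(1) unfolding X0_def by (auto simp: tpow_nat)
qed

lemma X0_inv: assumes "y \<in> X0" shows "tpow T k y \<in> X0"
proof (rule ccontr)
  assume "tpow T k y \<notin> X0"
  then obtain n :: nat where n: "n \<ge> 1" "(T ^^ n) (tpow T k y) = tpow T k y" unfolding X0_def by auto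
  hence "tpow T (int n + k) y = tpow T k y" by (simp add: tpow_add[OF bijT] tpow_nat)
  hence "tpow T k (tpow T (int n) y) = tpow T k y" by (simp add: tpow_add[OF bijT, symmetric] add.commute)
  hence "tpow T (int n) y = y" by (rule tpow_inj[OF bijT])
  thus False using X0_aper[OF assms, of "int n"] n by simp
qed

definition Cs :: "nat \<Rightarrow> nat \<Rightarrow> 'a::polish_space set" where
  "Cs m s = (if length (from_nat s :: nat list) = m
     then (\<Inter>k\<in>{..<m}. (Uf ((from_nat s :: nat list) ! k) - (T ^^ Suc k) -` Uf ((from_nat s :: nat list) ! k)))
     else {})"

lemma Cs_sets: "Cs m s \<in> sets M"
proof (cases "m = 0")
  case True thus ?thesis using sets.top[of M] by (simp add: Cs_def)
next
  case False
  have "(\<Inter>k\<in>{..<m}. (Uf ((from_nat s :: nat list) ! k) - (T ^^ Suc k) -` Uf ((from_nat s :: nat list) ! k))) \<in> sets M"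
    using False by (intro sets.finite_INT sets.Diff Uf_sets sets_pre_funpow) auto
  thus ?thesis by (simp add: Cs_def)
qed

lemma Cs_disc: assumes "y \<in> Cs m s" "1 \<le> i" "i \<le> m" shows "(T ^^ i) y \<notin> Cs m s"
proof
  assume z: "(T ^^ i) y \<in> Cs m s"
  define L where "L = (from_nat s :: nat list)"
  have len: "length L = m" using assms(1) unfolding Cs_def L_def by (auto split: if_splits)
  define k where "k = i - 1"
  have k: "k < m" "Suc k = i" using assms unfolding k_def by auto
  have "y \<in> Uf (L ! k) - (T ^^ Suc k) -` Uf (L ! k)" using assms(1) len k unfolding Cs_def L_def[symmetric] by auto
  moreover have "(T ^^ i) y \<in> Uf (L ! k)" using z len k unfolding Cs_def L_def[symmetric] by auto
  ultimately show False using k by auto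
qed

lemma Cs_cover: assumes "y \<in> X0" shows "\<exists>s. y \<in> Cs m s"
proof -
  have "\<forall>k. \<exists>j. y \<in> Uf j \<and> (T ^^ Suc k) y \<notin> Uf j"
  proof
    fix k
    have "tpow T (int (Suc k)) y \<noteq> y" by (rule X0_aper[OF assms]) simp
    hence "(T ^^ Suc k) y \<noteq> y" by (metis tpow_nat)
    hence "y \<noteq> (T ^^ Suc k) y" by metis
    thus "\<exists>j. y \<in> Uf j \<and> (T ^^ Suc k) y \<notin> Uf j" by (rule Uf_sep)
  qed
  then obtain f where f: "\<And>k. y \<in> Uf (f k) \<and> (T ^^ Suc k) y \<notin> Uf (f k)" by metis
  define L where "L = map f [0..<m]"
  have "y \<in> Cs m (to_nat L)" unfolding Cs_def using f by (simp add: L_def)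
  thus ?thesis by blast
qed

definition Nb :: "nat \<Rightarrow> 'a::polish_space set \<Rightarrow> 'a::polish_space set" where
  "Nb m S = (\<Union>i\<in>{- int m..int m}. tpow T i -` S)"

lemma Nb_sets: "S \<in> sets M \<Longrightarrow> Nb m S \<in> sets M"
  unfolding Nb_def by (intro sets.finite_UN sets_pre_tpow) auto

primrec G :: "'a::polish_space set \<Rightarrow> nat \<Rightarrow> nat \<Rightarrow> 'a::polish_space set" where
  "G B m 0 = {}"
| "G B m (Suc s) = G B m s \<union> (Cs m s \<inter> B - Nb m (G B m s))"

definition Sel :: "'a::polish_space set \<Rightarrow> nat \<Rightarrow> 'a::polish_space set" where
  "Sel B m = (\<Union>s. G B m s)"

lemma G_sets: "B \<in> sets M \<Longrightarrow> G B m s \<in> sets M"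
  by (induction s) (auto intro!: sets.Un sets.Diff sets.Int Cs_sets Nb_sets)

lemma Sel_sets: "B \<in> sets M \<Longrightarrow> Sel B m \<in> sets M"
  unfolding Sel_def by (intro sets.countable_UN') (auto intro: G_sets)

lemma G_mono: "s \<le> s' \<Longrightarrow> G B m s \<subseteq> G B m s'"
  by (rule lift_Suc_mono_le[of "G B m"]) auto

lemma Sel_sub: "Sel B m \<subseteq> B"
proof -
  have "G B m s \<subseteq> B" for s by (induction s) auto
  thus ?thesis unfolding Sel_def by auto
qed

lemma G_disc: "1 \<le> i \<Longrightarrow> i \<le> int m \<Longrightarrow> y \<in> G B m s \<Longrightarrow> tpow T i y \<in> G B m s \<Longrightarrow> False"
proof (induction s arbitrary: y)
  case 0 thus ?case by simp
next
  case (Suc s)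
  have bk: "tpow T (-i) (tpow T i y) = y" using tpow_add[OF bijT, of "-i" i y] by simp
  show ?case
  proof (cases "y \<in> G B m s")
    case y: True
    show ?thesis
    proof (cases "tpow T i y \<in> G B m s")
      case True thus ?thesis using Suc y by blast
    next
      case False
      hence "tpow T i y \<notin> Nb m (G B m s)" using Suc.prems by auto
      moreover have "-i \<in> {- int m..int m}" using Suc.prems by auto
      ultimately show ?thesis using y bk unfolding Nb_def by blast
    qed
  next
    case y: False
    hence yn: "y \<notin> Nb m (G B m s)" "y \<in> Cs m s" using Suc.prems by auto
    show ?thesis
    proof (cases "tpow T i y \<in> G B m s")
      case True
      moreover have "i \<in> {- int m..int m}" using Suc.prems by auto
      ultimately show ?thesis using yn unfolding Nb_def by blast
    next
      case False
      hence "tpow T i y \<in> Cs m s" using Suc.prems by auto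
      moreover have "tpow T i y = (T ^^ nat i) y" using Suc.prems tpow_nat[of T "nat i"] by simp
      ultimately show ?thesis using Cs_disc[OF yn(2), of "nat i"] Suc.prems by simp
    qed
  qed
qed

lemma Sel_disc: assumes "1 \<le> i" "i \<le> int m" "y \<in> Sel B m" "tpow T i y \<in> Sel B m" shows False
proof -
  obtain s1 s2 where "y \<in> G B m s1" "tpow T i y \<in> G B m s2" using assms unfolding Sel_def by auto
  hence "y \<in> G B m (max s1 s2)" "tpow T i y \<in> G B m (max s1 s2)" using G_mono[of s1 "max s1 s2" B m] G_mono[of s2 "max s1 s2" B m] by auto
  thus False using G_disc assms by blast
qed

lemma Sel_cover: assumes "y \<in> B" "y \<in> X0" shows "\<exists>i. \<bar>i\<bar> \<le> int m \<and> tpow T i y \<in> Sel B m"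
proof -
  obtain s where s: "y \<in> Cs m s" using Cs_cover[OF assms(2)] by blast
  show ?thesis
  proof (cases "y \<in> Nb m (G B m s)")
    case True
    then obtain i where "i \<in> {- int m..int m}" "tpow T i y \<in> G B m s" unfolding Nb_def by auto
    thus ?thesis unfolding Sel_def by (intro exI[of _ i]) auto
  next
    case False
    hence gs: "y \<in> G B m (Suc s)" using s assms by simp
    have "y \<in> Sel B m" unfolding Sel_def using gs by blast
    thus ?thesis by (intro exI[of _ 0]) auto
  qed
qed

lemma Sel_measure: assumes "B \<in> sets M" shows "real (Suc m) * measure M (Sel B m) \<le> 1"
proof -
  define S where "S = Sel B m"
  have S: "S \<in> sets M" using Sel_sets[OF assms] unfolding S_def .
  define E where "E = (\<lambda>k. (T ^^ k) -` S)"
  have Es: "E k \<in> sets M" for k unfolding E_def using S by (intro sets_pre_funpow) auto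
  have Em: "measure M (E k) = measure M S" for k
    unfolding E_def measure_def using meas_pre_funpow[OF S, of T k] by simp
  have disj: "E k \<inter> E k' = {}" if "k < k'" "k' \<le> m" for k k'
  proof (rule ccontr)
    assume "E k \<inter> E k' \<noteq> {}"
    then obtain z where z: "(T ^^ k) z \<in> S" "(T ^^ k') z \<in> S" unfolding E_def by auto
    have kk: "k' = (k' - k) + k" using that by simp
    have "(T ^^ k') z = (T ^^ (k' - k)) ((T ^^ k) z)"
      by (metis kk funpow_add comp_apply)
    hence "(T ^^ k') z = tpow T (int (k' - k)) ((T ^^ k) z)" by (simp only: tpow_nat)
    thus False using Sel_disc[of "int (k' - k)" m "(T ^^ k) z" B] z that unfolding S_def by simp
  qed
  have "disjoint_family_on E {..m}"
    unfolding disjoint_family_on_def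
  proof (intro ballI impI)
    fix k k' assume "k \<in> {..m}" "k' \<in> {..m}" "k \<noteq> k'"
    thus "E k \<inter> E k' = {}" using disj[of k k'] disj[of k' k] by (cases "k < k'") auto
  qed
  hence "measure M (\<Union>k\<in>{..m}. E k) = (\<Sum>k\<in>{..m}. measure M (E k))"
    using Es by (intro measure_finite_Union) (auto simp: finite_measure.emeasure_finite[OF prob_space.finite_measure[OF prob_M]])
  also have "\<dots> = real (Suc m) * measure M S" using Em by simp
  finally have "real (Suc m) * measure M S = measure M (\<Union>k\<in>{..m}. E k)" by simp
  also have "\<dots> \<le> 1" using prob_space.prob_le_1[OF prob_M] .
  finally show ?thesis unfolding S_def .
qed

lemma fin_M: "finite_measure M"
  using prob_space.finite_measure[OF prob_M] .

primrec Am :: "nat \<Rightarrow> 'a::polish_space set" where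
  "Am 0 = X0"
| "Am (Suc j) = Sel (Am j) (Suc j)"

lemma Am_sets: "Am j \<in> sets M"
  by (induction j) (auto intro: X0_sets Sel_sets)

lemma Am_Suc_sub: "Am (Suc j) \<subseteq> Am j"
  using Sel_sub by simp

lemma Am_anti: "j1 \<le> j2 \<Longrightarrow> Am j2 \<subseteq> Am j1"
  by (rule lift_Suc_antimono_le[of Am]) (use Am_Suc_sub in auto)

lemma Am_X0: "Am j \<subseteq> X0"
  using Am_anti[of 0 j] by simp

lemma Am_measure: "real (Suc (Suc j)) * measure M (Am (Suc j)) \<le> 1"
  using Sel_measure[OF Am_sets[of j], of "Suc j"] by simp

lemma Am_hits: assumes "x \<in> X0"
  shows "(\<exists>i>a. tpow T i x \<in> Am j) \<and> (\<exists>i<a. tpow T i x \<in> Am j)"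
proof (induction j arbitrary: a)
  case 0
  have "tpow T (a + 1) x \<in> Am 0" "tpow T (a - 1) x \<in> Am 0" using X0_inv[OF assms] by simp_all
  moreover have "a < a + 1" "a - 1 < a" by simp_all
  ultimately show ?case by blast
next
  case (Suc j)
  obtain i where i: "i > a + int (Suc j)" "tpow T i x \<in> Am j" using Suc[of "a + int (Suc j)"] by blast
  have "tpow T i x \<in> X0" using X0_inv[OF assms] .
  hence "\<exists>i'. \<bar>i'\<bar> \<le> int (Suc j) \<and> tpow T i' (tpow T i x) \<in> Sel (Am j) (Suc j)"
    by (rule Sel_cover[OF i(2)])
  then obtain i' where i': "\<bar>i'\<bar> \<le> int (Suc j)" "tpow T i' (tpow T i x) \<in> Am (Suc j)"
    by auto
  have "tpow T (i' + i) x \<in> Am (Suc j)" using i' by (simp add: tpow_add[OF bijT])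
  moreover have "i' + i > a" using i i' by simp
  ultimately have up: "\<exists>i>a. tpow T i x \<in> Am (Suc j)" by blast
  obtain k where k: "k < a - int (Suc j)" "tpow T k x \<in> Am j" using Suc[of "a - int (Suc j)"] by blast
  have "tpow T k x \<in> X0" using X0_inv[OF assms] .
  hence "\<exists>k'. \<bar>k'\<bar> \<le> int (Suc j) \<and> tpow T k' (tpow T k x) \<in> Sel (Am j) (Suc j)"
    by (rule Sel_cover[OF k(2)])
  then obtain k' where k': "\<bar>k'\<bar> \<le> int (Suc j)" "tpow T k' (tpow T k x) \<in> Am (Suc j)"
    by auto
  have "tpow T (k' + k) x \<in> Am (Suc j)" using k' by (simp add: tpow_add[OF bijT])
  moreover have "k' + k < a" using k k' by simp
  ultimately show ?case using up by blast
qed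

definition II :: "'a::polish_space set" where "II = (\<Inter>j. Am j)"

lemma II_null: "II \<in> null_sets M"
proof -
  have IIs: "II \<in> sets M" unfolding II_def by (intro sets.countable_INT) (auto intro: Am_sets)
  have le: "measure M II \<le> measure M (Am (Suc j))" for j
    using finite_measure.finite_measure_mono[OF fin_M, of II "Am (Suc j)"] Am_sets unfolding II_def by blast
  have "measure M II = 0"
  proof (rule ccontr)
    assume "measure M II \<noteq> 0"
    hence pos: "0 < measure M II" using measure_nonneg[of M II] by linarith
    obtain n :: nat where n: "0 < n" "inverse (real n) < measure M II"
      using ex_inverse_of_nat_less[OF pos] by blast
    have "1 < real n * measure M II" using n by (simp add: field_simps)
    also have "\<dots> \<le> real (Suc (Suc n)) * measure M (Am (Suc n))"
      using le[of n] by (intro mult_mono) auto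
    also have "\<dots> \<le> 1" by (rule Am_measure)
    finally show False by simp
  qed
  hence "emeasure M II = 0" using finite_measure.emeasure_eq_measure[OF fin_M, of II] by simp
  thus ?thesis using IIs by auto
qed

definition Sat :: "'a::polish_space set" where "Sat = (\<Union>i::int. tpow T i -` II)"

lemma Sat_null: "Sat \<in> null_sets M"
  unfolding Sat_def by (intro null_sets_UN' null_pre_tpow II_null) auto

definition XX :: "'a::polish_space set" where "XX = X0 - Sat"

lemma XX_null: "- XX \<in> null_sets M"
proof -
  have "- XX = - X0 \<union> Sat" unfolding XX_def by auto
  thus ?thesis using X0_null Sat_null by auto
qed

lemma XX_sets: "XX \<in> sets M"
  unfolding XX_def using X0_sets Sat_null by auto

lemma XX_X0: "y \<in> XX \<Longrightarrow> y \<in> X0" unfolding XX_def by auto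

lemma XX_inv: assumes "y \<in> XX" shows "tpow T k y \<in> XX"
proof -
  have "tpow T k y \<in> X0" using X0_inv assms unfolding XX_def by auto
  moreover have "tpow T k y \<notin> Sat"
  proof
    assume "tpow T k y \<in> Sat"
    then obtain i where "tpow T i (tpow T k y) \<in> II" unfolding Sat_def by auto
    hence "tpow T (i + k) y \<in> II" by (simp add: tpow_add[OF bijT])
    hence "y \<in> Sat" unfolding Sat_def by auto
    thus False using assms unfolding XX_def by auto
  qed
  ultimately show ?thesis unfolding XX_def by auto
qed

lemma XX_notII: assumes "y \<in> XX" shows "\<exists>j. y \<notin> Am (Suc j)"
proof -
  have "tpow T 0 y \<notin> II" using assms unfolding XX_def Sat_def by blast
  hence "y \<notin> II" by simp
  then obtain j where j: "y \<notin> Am j" unfolding II_def by auto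
  have "j \<noteq> 0" using j XX_X0[OF assms] by (cases j) auto
  hence "Suc (j - 1) = j" by simp
  thus ?thesis using j by metis
qed

definition lev :: "'a::polish_space \<Rightarrow> nat" where "lev y = (LEAST j. y \<notin> Am (Suc j))"

lemma lev_iff: assumes "y \<in> XX" shows "j < lev y \<longleftrightarrow> y \<in> Am (Suc j)"
proof
  assume "j < lev y"
  thus "y \<in> Am (Suc j)" using not_less_Least[of j "\<lambda>j. y \<notin> Am (Suc j)"] unfolding lev_def by blast
next
  assume a: "y \<in> Am (Suc j)"
  show "j < lev y"
  proof (rule ccontr)
    assume "\<not> j < lev y"
    hence "Am (Suc j) \<subseteq> Am (Suc (lev y))" by (metis Am_anti Suc_le_mono not_less)
    moreover have "y \<notin> Am (Suc (lev y))" unfolding lev_def by (rule LeastI_ex[OF XX_notII[OF assms]])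
    ultimately show False using a by auto
  qed
qed

definition lv :: "'a::polish_space \<Rightarrow> int \<Rightarrow> nat" where "lv x i = lev (tpow T i x)"
definition bt :: "'a::polish_space \<Rightarrow> int \<Rightarrow> nat \<Rightarrow> bool" where "bt x i j = (tpow T i x \<in> Uf j)"

lemma good_lv: assumes "x \<in> XX" shows "good (lv x)"
  unfolding good_def
proof (intro allI)
  fix j a
  obtain i i' where "i > a" "tpow T i x \<in> Am (Suc j)" "i' < a" "tpow T i' x \<in> Am (Suc j)"
    using Am_hits[OF XX_X0[OF assms], of a "Suc j"] by blast
  thus "(\<exists>i>a. j < lv x i) \<and> (\<exists>i<a. j < lv x i)"
    unfolding lv_def using lev_iff[OF XX_inv[OF assms]] by blast
qed

lemma lv_shift: "lv (tpow T k x) = (\<lambda>i. lv x (i + k))"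
  unfolding lv_def by (simp add: tpow_add[OF bijT])

lemma bt_shift: "bt (tpow T k x) = (\<lambda>i. bt x (i + k))"
  unfolding bt_def by (simp add: tpow_add[OF bijT])

definition hh :: "'a::polish_space \<Rightarrow> nat" where
  "hh x = (if x \<in> XX then hv (lv x) (bt x) 0 else 1)"

lemma hh_tpow: assumes "x \<in> XX" shows "hh (tpow T k x) = hv (lv x) (bt x) k"
  using XX_inv[OF assms, of k] hv_shift[of "lv x" k "bt x" 0]
  unfolding hh_def lv_shift bt_shift by simp

lemma hh_pos: "1 \<le> hh x"
  unfolding hh_def hv_def by simp

definition Lv :: "nat \<Rightarrow> 'a::polish_space set" where
  "Lv v = - Am (Suc v) - (\<Union>j\<in>{..<v}. - Am (Suc j))"

lemma compl_sets: "A \<in> sets M \<Longrightarrow> - A \<in> sets M"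
  using sets.compl_sets[of A M] by (simp add: Compl_eq_Diff_UNIV)

lemma Lv_sets: "Lv v \<in> sets M"
  unfolding Lv_def by (intro sets.Diff sets.finite_UN compl_sets Am_sets) auto

lemma Lv_iff: assumes "y \<in> XX" shows "y \<in> Lv v \<longleftrightarrow> lev y = v"
proof -
  have "y \<in> Lv v \<longleftrightarrow> \<not> v < lev y \<and> (\<forall>j<v. j < lev y)"
    unfolding Lv_def using lev_iff[OF assms] by auto
  also have "\<dots> \<longleftrightarrow> lev y = v" by (metis less_irrefl nat_neq_iff)
  finally show ?thesis .
qed

definition Bv :: "bool list \<Rightarrow> 'a::polish_space set" where
  "Bv bl = UNIV - (\<Union>j\<in>{..<length bl}. (if bl ! j then - Uf j else Uf j))"

lemma Bv_sets: "Bv bl \<in> sets M"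
  unfolding Bv_def using sets.top[of M]
  by (intro sets.Diff sets.finite_UN) (auto intro: compl_sets Uf_sets)

lemma Bv_iff: "y \<in> Bv bl \<longleftrightarrow> (\<forall>j<length bl. (y \<in> Uf j) = bl ! j)"
  unfolding Bv_def by (auto split: if_splits)

definition mt :: "nat \<times> nat list \<times> bool list list \<Rightarrow> 'a::polish_space set" where
  "mt c = (case c of (S, Ls, Bs) \<Rightarrow>
     UNIV - (\<Union>k\<in>{..<length Ls}. - (tpow T (int k - int S) -` Lv (Ls ! k)))
          - (\<Union>k\<in>{..<length Bs}. - (tpow T (int k) -` Bv (Bs ! k))))"

lemma mt_sets: "mt c \<in> sets M"
  unfolding mt_def using sets.top[of M]
  by (auto split: prod.splits intro!: sets.Diff sets.finite_UN compl_sets sets_pre_tpow Lv_sets Bv_sets)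

lemma mt_iff: assumes "y \<in> XX"
  shows "y \<in> mt (S, Ls, Bs) \<longleftrightarrow> (\<forall>k<length Ls. lv y (int k - int S) = Ls ! k)
     \<and> (\<forall>k<length Bs. \<forall>j<length (Bs ! k). bt y (int k) j = Bs ! k ! j)"
  unfolding mt_def lv_def bt_def using Lv_iff[OF XX_inv[OF assms]] Bv_iff by auto

definition sig :: "'a::polish_space \<Rightarrow> nat \<times> nat list \<times> bool list list" where
  "sig x = (let l = lv x; c = Rn l 0; S = (\<Sum>k\<le>c. Pn l (int k)) in
     (S, map (\<lambda>k. l (int k - int S)) [0..<S + c + 1], map (\<lambda>k. map (bt x (int k)) [0..<l 0]) [0..<c + 1]))"

lemma sig_own: assumes "x \<in> XX" shows "x \<in> mt (sig x)"
  unfolding sig_def Let_def using mt_iff[OF assms] by (simp del: upt_Suc)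

lemma sig_loc: assumes x: "x \<in> XX" and y: "y \<in> XX" and m: "y \<in> mt (sig x)" shows "hh y = hh x"
proof -
  define l where "l = lv x"
  define c where "c = Rn l 0"
  define S where "S = (\<Sum>k\<le>c. Pn l (int k))"
  have sx: "sig x = (S, map (\<lambda>k. l (int k - int S)) [0..<S + c + 1], map (\<lambda>k. map (bt x (int k)) [0..<l 0]) [0..<c + 1])"
    unfolding sig_def Let_def l_def c_def S_def ..
  from m[unfolded sx, unfolded mt_iff[OF y]]
  have A: "\<And>k. k < S + c + 1 \<Longrightarrow> lv y (int k - int S) = l (int k - int S)"
   and B: "\<And>k j. k < c + 1 \<Longrightarrow> j < l 0 \<Longrightarrow> bt y (int k) j = bt x (int k) j"
    by (auto simp del: upt_Suc)
  have "hv (lv y) (bt y) 0 = hv l (bt x) 0"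
  proof (rule locality)
    show "good l" unfolding l_def by (rule good_lv[OF x])
    show "good (lv y)" by (rule good_lv[OF y])
    show "\<forall>i. - int (\<Sum>k\<le>Rn l 0. Pn l (int k)) \<le> i \<and> i \<le> int (Rn l 0) \<longrightarrow> lv y i = l i"
    proof (intro allI impI)
      fix i assume "- int (\<Sum>k\<le>Rn l 0. Pn l (int k)) \<le> i \<and> i \<le> int (Rn l 0)"
      hence i: "- int S \<le> i" "i \<le> int c" unfolding S_def c_def by simp_all
      define k where "k = nat (i + int S)"
      have "k < S + c + 1" "int k - int S = i" using i unfolding k_def by auto
      thus "lv y i = l i" using A by metis
    qed
    show "\<forall>i j. 0 \<le> i \<and> i \<le> int (Rn l 0) \<and> j < l 0 \<longrightarrow> bt y i j = bt x i j"
    proof (intro allI impI)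
      fix i j assume a: "0 \<le> i \<and> i \<le> int (Rn l 0) \<and> j < l 0"
      hence "nat i < c + 1" "int (nat i) = i" unfolding c_def by auto
      thus "bt y i j = bt x i j" using B a by metis
    qed
  qed
  thus ?thesis unfolding hh_def l_def using x y by simp
qed

lemma hh_meas: "hh \<in> measurable M (count_space UNIV)"
  unfolding measurable_count_space_eq2_countable
proof (intro conjI ballI)
  show "hh \<in> space M \<rightarrow> UNIV" by simp
  fix v :: nat
  define Q where "Q = {c. \<exists>x\<in>XX. sig x = c \<and> hh x = v}"
  have E1: "hh -` {v} \<inter> XX = XX \<inter> (\<Union>c\<in>Q. mt c)"
  proof
    show "hh -` {v} \<inter> XX \<subseteq> XX \<inter> (\<Union>c\<in>Q. mt c)"
      unfolding Q_def using sig_own by blast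
    show "XX \<inter> (\<Union>c\<in>Q. mt c) \<subseteq> hh -` {v} \<inter> XX"
      unfolding Q_def using sig_loc by blast
  qed
  have s1: "hh -` {v} \<inter> XX \<in> sets M"
    unfolding E1 by (intro sets.Int XX_sets sets.countable_UN' countableI_type) (auto intro: mt_sets)
  have s2: "hh -` {v} - XX \<in> sets M"
    using complete[OF _ XX_null, of "hh -` {v} - XX"] by auto
  have eq: "hh -` {v} \<inter> space M = (hh -` {v} \<inter> XX) \<union> (hh -` {v} - XX)" by auto
  show "hh -` {v} \<inter> space M \<in> sets M" unfolding eq by (rule sets.Un[OF s1 s2])
qed

lemma hh_gen: "generates M T hh"
  unfolding generates_def
proof (intro bexI[of _ "- XX"] ballI impI XX_null)
  fix x y assume x: "x \<in> space M - - XX" and y: "y \<in> space M - - XX"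
    and eq: "\<forall>i. hh (tpow T i x) = hh (tpow T i y)"
  have xX: "x \<in> XX" and yX: "y \<in> XX" using x y by auto
  have "\<forall>i. hv (lv x) (bt x) i = hv (lv y) (bt y) i" using eq hh_tpow[OF xX] hh_tpow[OF yX] by simp
  from gen_bits[OF good_lv[OF xX] this] have "bt y 0 j = bt x 0 j" for j .
  hence "(y \<in> Uf j) = (x \<in> Uf j)" for j unfolding bt_def by simp
  thus "x = y" using Uf_sep by metis
qed

lemma hh_det:
  assumes n1: "1 \<le> n"
  shows "\<exists>F :: nat list \<Rightarrow> nat. AE \<omega> in M. hh (inv T \<omega>) = n \<longrightarrow>
                   hh \<omega> = F (map (\<lambda>j. hh ((inv T ^^ (n - j)) \<omega>)) [0..<n])"
proof -
  define win where "win = (\<lambda>\<omega>. map (\<lambda>j. hh ((inv T ^^ (n - j)) \<omega>)) [0..<n])"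
  define F where "F = (\<lambda>w. SOME v. \<exists>\<omega>\<in>XX. win \<omega> = w \<and> hh \<omega> = v)"
  have P: "hh \<omega> = F (win \<omega>)" if \<omega>: "\<omega> \<in> XX" and hn: "hh (inv T \<omega>) = n" for \<omega>
  proof -
    have "\<exists>v. \<exists>\<omega>'\<in>XX. win \<omega>' = win \<omega> \<and> hh \<omega>' = v" using \<omega> by blast
    hence "\<exists>\<omega>'\<in>XX. win \<omega>' = win \<omega> \<and> hh \<omega>' = F (win \<omega>)"
      unfolding F_def by (rule someI_ex)
    then obtain \<omega>' where \<omega>': "\<omega>' \<in> XX" "win \<omega>' = win \<omega>" "hh \<omega>' = F (win \<omega>)" by blast
    have wv: "hh ((inv T ^^ m) z) = hv (lv z) (bt z) (- int m)" if "z \<in> XX" for m z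
      using hh_tpow[OF that, of "- int m"] by (simp add: tpow_neg_nat)
    have "hv (lv \<omega>) (bt \<omega>) 0 = hv (lv \<omega>') (bt \<omega>') 0"
    proof (rule determ)
      show "good (lv \<omega>)" "good (lv \<omega>')" using good_lv \<omega> \<omega>' by auto
      show "n = hv (lv \<omega>) (bt \<omega>) (-1)" using hn wv[OF \<omega>, of 1] by simp
      show "\<forall>i. - int n \<le> i \<and> i \<le> -1 \<longrightarrow> hv (lv \<omega>) (bt \<omega>) i = hv (lv \<omega>') (bt \<omega>') i"
      proof (intro allI impI)
        fix i assume i: "- int n \<le> i \<and> i \<le> -1"
        define j where "j = nat (i + int n)"
        have j: "j < n" "- int (n - j) = i" using i unfolding j_def by auto
        have "win \<omega> ! j = win \<omega>' ! j" using \<omega>' by simp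
        hence "hh ((inv T ^^ (n - j)) \<omega>) = hh ((inv T ^^ (n - j)) \<omega>')" unfolding win_def using j by simp
        thus "hv (lv \<omega>) (bt \<omega>) i = hv (lv \<omega>') (bt \<omega>') i" using wv[OF \<omega>] wv[OF \<omega>'(1)] j by metis
      qed
    qed
    thus "hh \<omega> = F (win \<omega>)" using \<omega> \<omega>' unfolding hh_def by simp
  qed
  have "AE \<omega> in M. hh (inv T \<omega>) = n \<longrightarrow> hh \<omega> = F (win \<omega>)"
    by (rule AE_I'[OF XX_null]) (use P in auto)
  thus ?thesis unfolding win_def by blast
qed

end

theorem mainTheorem1:
  fixes M :: "'a::polish_space measure" and T :: "'a \<Rightarrow> 'a"
  assumes "lebesgue_prob_space M"
    and "non_periodic M T"
  shows "\<exists>h :: 'a \<Rightarrow> nat.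
           h \<in> measurable M (count_space UNIV) \<and>
           (\<forall>\<omega>. h \<omega> \<ge> 1) \<and>
           generates M T h \<and>
           (\<forall>n::nat. n \<ge> 1 \<longrightarrow>
              (\<exists>F :: nat list \<Rightarrow> nat.
                 AE \<omega> in M. h (inv T \<omega>) = n \<longrightarrow>
                   h \<omega> = F (map (\<lambda>j. h ((inv T ^^ (n - j)) \<omega>)) [0..<n])))"
proof -
  interpret npsetup M T using assms by (rule npsetup.intro)
  show ?thesis using hh_meas hh_pos hh_gen hh_det by blast
qed


end
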